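(* Let $n\geq 1$, let $p$ be a prime, let $R\subset E_n=\{1,\dots,n\}$ and let $S\subset E_n$ be a nonempty subset. Then there exists exactly one subset $T\subset E_n$ such that $T$ is $(R,S)$-admissible and $T$ is $i$-positive for every $i\in S$. Equivalently, there exists a unique positive admissible homogeneous $S$-adapted $p$-cone, namely $\{x\in\mathbb{Z}^n : F^{(i)}_T(x)\leq 0 \text{ for all } i\in S\}$ for this $T$.
   Context: Indices of tuples $x=(x_1,\dots,x_n)\in\mathbb{Z}^n$ and elements of $E_n$ are taken modulo $n$ (e.g. $x_{n+1}=x_1$, and $0$ denotes $n$). For $T\subset E_n$ and $i\in E_n$ put $\delta_T^{(i)}=-1$ if $i\in T$ and $\delta_T^{(i)}=1$ if $i\notin T$. For $d\in E_n$ and $T\subset E_n$, the $p$-expression with starting index $d$ is the linear form $F^{(d)}_T(x)=\sum_{i=0}^{n-1}p^i\,\delta_T^{(d+i)}\,x_{d+i}$ on $\mathbb{Z}^n$. An $S$-adapted $p$-cone is a cone of the form $\{x\in\mathbb{Z}^n: F^{(i)}_{T^{(i)}}(x)\leq 0 \ \forall i\in S\}$ attached to a family $(T^{(i)})_{i\in S}$ of subsets of $E_n$; it is homogeneous if all $T^{(i)}$ equal a common $T$ (so homogeneous $S$-adapted $p$-cones are parametrized by subsets $T$). A subset $T\subset E_n$ is $(R,S)$-admissible if for every $i\in E_n$ with $i+1\notin S$: if $i\notin R$ then exactly one of $i,i+1$ lies in $T$, and if $i\in R$ then either both or neither of $i,i+1$ lie in $T$. For $i\in E_n$, $T$ is $i$-positive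 if ($i-1\in T \iff i-1\in R$). An $S$-adapted $p$-cone is admissible (resp. positive) if each $T^{(i)}$ is $(R,S)$-admissible (resp. $i$-positive). *)

theory Defs
  imports "HOL-Computational_Algebra.Primes"
begin

definition nxt :: "nat \<Rightarrow> nat \<Rightarrow> nat" where
  "nxt n i = (if i = n then 1 else i + 1)"

definition prv :: "nat \<Rightarrow> nat \<Rightarrow> nat" where
  "prv n i = (if i = 1 then n else i - 1)"

definition admissible :: "nat \<Rightarrow> nat set \<Rightarrow> nat set \<Rightarrow> nat set \<Rightarrow> bool" where
  "admissible n R S T \<longleftrightarrow>
     (\<forall>i\<in>{1..n}. nxt n i \<notin> S \<longrightarrow>
        ((i \<notin> R \<longrightarrow> (i \<in> T \<longleftrightarrow> nxt n i \<notin> T)) \<and>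
         (i \<in> R \<longrightarrow> (i \<in> T \<longleftrightarrow> nxt n i \<in> T))))"

definition positive_at :: "nat \<Rightarrow> nat set \<Rightarrow> nat set \<Rightarrow> nat \<Rightarrow> bool" where
  "positive_at n R T i \<longleftrightarrow> (prv n i \<in> T \<longleftrightarrow> prv n i \<in> R)"

end

theory Submission
  imports Defs
begin

definition cyc :: "nat \<Rightarrow> nat \<Rightarrow> nat" where
  "cyc n t = t mod n + 1"

lemma nxt_cyc: "n \<ge> 1 \<Longrightarrow> nxt n (cyc n t) = cyc n (t+1)"
  unfolding nxt_def cyc_def by (simp add: mod_Suc)

lemma prv_cyc: "n \<ge> 1 \<Longrightarrow> prv n (cyc n (t+1)) = cyc n t"
proof -
  assume n: "n \<ge> 1"
  have "nxt n (cyc n t) = cyc n (t+1)" using nxt_cyc[OF n] .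
  moreover have "cyc n t \<in> {1..n}" using n unfolding cyc_def
    by (simp add: Suc_leI)
  ultimately show ?thesis unfolding prv_def nxt_def by (auto split: if_splits)
qed

lemma cyc_surj: "n \<ge> 1 \<Longrightarrow> k \<in> {1..n} \<Longrightarrow> k = cyc n (k-1)"
  unfolding cyc_def by auto

lemma cyc_range: "n \<ge> 1 \<Longrightarrow> cyc n t \<in> {1..n}"
  unfolding cyc_def by (simp add: Suc_leI)

lemma cyc_period: "cyc n (t + n) = cyc n t"
  unfolding cyc_def by simp

lemma exists_dist:
  assumes n: "n \<ge> 1" and S: "S \<subseteq> {1..n}" "S \<noteq> {}"
  shows "\<exists>d. 1 \<le> d \<and> d \<le> n \<and> cyc n (t+d) \<in> S"
proof -
  obtain s where s: "s \<in> S" using S by auto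
  have s1: "1 \<le> s" "s \<le> n" using s S by auto
  then obtain s' where s': "s = Suc s'" "s' < n" by (cases s) auto
  define r where "r = t mod n"
  have r: "r < n" using n unfolding r_def by simp
  define d where "d = (s' + (n - r - 1)) mod n + 1"
  have "(t + d) mod n = (r + d) mod n" unfolding r_def by (simp add: mod_add_left_eq)
  also have "(r + d) mod n = (r + (s' + (n - r - 1)) + 1) mod n"
    unfolding d_def by (metis add.assoc mod_add_left_eq mod_add_right_eq)
  also have "r + (s' + (n - r - 1)) + 1 = s' + n" using r by simp
  also have "(s' + n) mod n = s'" using s' by simp
  finally have "cyc n (t+d) = s" unfolding cyc_def using s' by simp
  moreover have "1 \<le> d" "d \<le> n" unfolding d_def using n
    by (auto simp: Suc_leI)
  ultimately show ?thesis using s by blast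
qed

lemma agree:
  assumes n: "n \<ge> 1"
    and A1: "admissible n R S T1" and P1: "\<forall>i\<in>S. positive_at n R T1 i"
    and A2: "admissible n R S T2" and P2: "\<forall>i\<in>S. positive_at n R T2 i"
  shows "1 \<le> m \<Longrightarrow> cyc n (t+m) \<in> S \<Longrightarrow> (cyc n t \<in> T1 \<longleftrightarrow> cyc n t \<in> T2)"
proof (induction m arbitrary: t)
  case 0 then show ?case by simp
next
  case (Suc m)
  show ?case
  proof (cases "cyc n (t+1) \<in> S")
    case True
    then have "positive_at n R T1 (cyc n (t+1))" "positive_at n R T2 (cyc n (t+1))"
      using P1 P2 by auto
    then show ?thesis unfolding positive_at_def prv_cyc[OF n] by simp
  next
    case False
    then have m: "m \<ge> 1" using Suc by (cases m) auto
    have "cyc n ((t+1)+m) \<in> S" using Suc.prems by simp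
    then have ih: "cyc n (t+1) \<in> T1 \<longleftrightarrow> cyc n (t+1) \<in> T2" using Suc.IH m by blast
    have "nxt n (cyc n t) \<notin> S" using False nxt_cyc[OF n] by simp
    have r: "cyc n t \<in> {1..n}" using cyc_range[OF n] .
    have a1: "(cyc n t \<notin> R \<longrightarrow> (cyc n t \<in> T1 \<longleftrightarrow> cyc n (t+1) \<notin> T1)) \<and> (cyc n t \<in> R \<longrightarrow> (cyc n t \<in> T1 \<longleftrightarrow> cyc n (t+1) \<in> T1))"
      using A1[unfolded admissible_def, rule_format, OF r] False unfolding nxt_cyc[OF n] by blast
    have a2: "(cyc n t \<notin> R \<longrightarrow> (cyc n t \<in> T2 \<longleftrightarrow> cyc n (t+1) \<notin> T2)) \<and> (cyc n t \<in> R \<longrightarrow> (cyc n t \<in> T2 \<longleftrightarrow> cyc n (t+1) \<in> T2))"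
      using A2[unfolded admissible_def, rule_format, OF r] False unfolding nxt_cyc[OF n] by blast
    show ?thesis using a1 a2 ih by blast
  qed
qed

primrec g :: "nat \<Rightarrow> nat set \<Rightarrow> nat set \<Rightarrow> nat \<Rightarrow> nat \<Rightarrow> bool" where
  "g n R S 0 t = False"
| "g n R S (Suc m) t = (if cyc n (t+1) \<in> S then cyc n t \<in> R else (g n R S m (t+1) = (cyc n t \<in> R)))"

lemma g_period: "t mod n = t' mod n \<Longrightarrow> g n R S m t = g n R S m t'"
proof (induction m arbitrary: t t')
  case 0 then show ?case by simp
next
  case (Suc m)
  have "(t+1) mod n = (t'+1) mod n" using Suc.prems by (metis mod_add_left_eq)
  then have a: "cyc n (t+1) = cyc n (t'+1)" unfolding cyc_def by simp
  have b: "cyc n t = cyc n t'" using Suc.prems unfolding cyc_def by simp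
  have c: "g n R S m (t+1) = g n R S m (t'+1)" using Suc.IH[OF \<open>(t+1) mod n = (t'+1) mod n\<close>] .
  show ?case using a b c by simp
qed

lemma g_stable: "1 \<le> d \<Longrightarrow> d \<le> m \<Longrightarrow> d \<le> m' \<Longrightarrow> cyc n (t+d) \<in> S \<Longrightarrow> g n R S m t = g n R S m' t"
proof (induction d arbitrary: t m m')
  case 0 then show ?case by simp
next
  case (Suc d)
  obtain k where k: "m = Suc k" using Suc.prems by (cases m) auto
  obtain k' where k': "m' = Suc k'" using Suc.prems by (cases m') auto
  show ?case
  proof (cases "cyc n (t+1) \<in> S")
    case True then show ?thesis using k k' by simp
  next
    case False
    then have d: "d \<ge> 1" using Suc.prems by (cases d) auto
    have "cyc n ((t+1)+d) \<in> S" using Suc.prems by simp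
    moreover have "d \<le> k" "d \<le> k'" using Suc.prems k k' by auto
    ultimately have "g n R S k (t+1) = g n R S k' (t+1)" using Suc.IH[where t="t+1" and m=k and m'=k'] d by blast
    then show ?thesis using k k' False by simp
  qed
qed

theorem theoremA:
  fixes n p :: nat and R S :: "nat set"
  assumes "n \<ge> 1" and "prime p"
    and "R \<subseteq> {1..n}" and "S \<subseteq> {1..n}" and "S \<noteq> {}"
  shows "\<exists>!T. T \<subseteq> {1..n} \<and> admissible n R S T \<and> (\<forall>i\<in>S. positive_at n R T i)"
proof -
  have n: "n \<ge> 1" using assms by simp
  define T where "T = {cyc n t | t. g n R S n t}"
  have memT: "cyc n t \<in> T \<longleftrightarrow> g n R S n t" for t
  proof
    assume "cyc n t \<in> T"
    then obtain t' where "cyc n t = cyc n t'" "g n R S n t'" unfolding T_def by auto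
    then have "t mod n = t' mod n" unfolding cyc_def by simp
    then show "g n R S n t" using g_period \<open>g n R S n t'\<close> by blast
  qed (auto simp: T_def)
  obtain m where m: "n = Suc m" using n by (cases n) auto
  have sub: "T \<subseteq> {1..n}" unfolding T_def using cyc_range[OF n] by auto
  have adm: "admissible n R S T"
    unfolding admissible_def
  proof (intro ballI impI)
    fix i assume i: "i \<in> {1..n}" and ns: "nxt n i \<notin> S"
    define t where "t = i - 1"
    have it: "i = cyc n t" using cyc_surj[OF n i] unfolding t_def .
    have ns': "cyc n (t+1) \<notin> S" using ns it nxt_cyc[OF n] by simp
    obtain d where d: "1 \<le> d" "d \<le> n" "cyc n ((t+1)+d) \<in> S" using exists_dist[OF n assms(4,5)] by blast
    have "d \<noteq> n" using d ns' cyc_period[of n "t+1"] by auto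
    then have "d \<le> m" using d m by simp
    then have st: "g n R S m (t+1) = g n R S n (t+1)" using g_stable[where d=d and m=m and m'=n and t="t+1" and n=n and R=R and S=S, OF d(1) _ d(2) d(3)] by blast
    have "g n R S (Suc m) t = (g n R S m (t+1) = (cyc n t \<in> R))" using ns' by simp
    then have gg: "g n R S n t = (g n R S n (t+1) = (cyc n t \<in> R))" unfolding m[symmetric] st .
    have e1: "i \<in> T \<longleftrightarrow> g n R S n t" using memT[of t] it by simp
    have e2: "nxt n i \<in> T \<longleftrightarrow> g n R S n (t+1)" using memT[of "t+1"] nxt_cyc[OF n, of t] it by simp
    have e3: "i \<in> R \<longleftrightarrow> cyc n t \<in> R" using it by simp
    show "(i \<notin> R \<longrightarrow> (i \<in> T \<longleftrightarrow> nxt n i \<notin> T)) \<and> (i \<in> R \<longrightarrow> (i \<in> T \<longleftrightarrow> nxt n i \<in> T))"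
      using gg e1 e2 e3 by blast
  qed
  have pos: "\<forall>i\<in>S. positive_at n R T i"
  proof
    fix i assume i: "i \<in> S"
    then have i1: "i \<in> {1..n}" using assms by auto
    define t where "t = i + n - 2"
    have "i = cyc n (t+1)"
    proof -
      have "t + 1 = (i - 1) + n" using i1 n unfolding t_def by auto
      then have "cyc n (t+1) = cyc n (i-1)" by (simp add: cyc_period)
      then show ?thesis by (rule trans[OF cyc_surj[OF n i1] sym])
    qed
    then have iS: "cyc n (t+1) \<in> S" using i by simp
    have "g n R S (Suc m) t = (cyc n t \<in> R)" using iS by simp
    then have gg: "g n R S n t = (cyc n t \<in> R)" unfolding m[symmetric] .
    have pv: "prv n i = cyc n t" using prv_cyc[OF n, of t] \<open>i = cyc n (t+1)\<close> by simp
    show "positive_at n R T i" unfolding positive_at_def pv memT gg ..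
  qed
  have uniq: "T' = T" if T': "T' \<subseteq> {1..n}" "admissible n R S T'" "\<forall>i\<in>S. positive_at n R T' i" for T'
  proof
    show "T' \<subseteq> T"
    proof
      fix k assume k: "k \<in> T'"
      then have k1: "k \<in> {1..n}" using T' by auto
      obtain d where d: "1 \<le> d" "d \<le> n" "cyc n ((k-1)+d) \<in> S" using exists_dist[OF n assms(4,5)] by blast
      have e: "cyc n (k-1) = k" using cyc_surj[OF n k1] by (rule sym)
      show "k \<in> T" using agree[OF n T'(2,3) adm pos d(1) d(3)] k e by simp
    qed
    show "T \<subseteq> T'"
    proof
      fix k assume k: "k \<in> T"
      then have k1: "k \<in> {1..n}" using sub by auto
      obtain d where d: "1 \<le> d" "d \<le> n" "cyc n ((k-1)+d) \<in> S" using exists_dist[OF n assms(4,5)] by blast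
      have e: "cyc n (k-1) = k" using cyc_surj[OF n k1] by (rule sym)
      show "k \<in> T'" using agree[OF n T'(2,3) adm pos d(1) d(3)] k e by simp
    qed
  qed
  show ?thesis
  proof (rule ex1I[of _ T])
    show "T \<subseteq> {1..n} \<and> admissible n R S T \<and> (\<forall>i\<in>S. positive_at n R T i)" using sub adm pos by simp
  next
    fix T' assume "T' \<subseteq> {1..n} \<and> admissible n R S T' \<and> (\<forall>i\<in>S. positive_at n R T' i)"
    then show "T' = T" using uniq by simp
  qed
qed

end
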